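(* Every normal subgroup of $G_{\mathtt{ALD}}$ that contains the image $\mathrm{sh}_0(G_{\mathtt{ALD}})$ contains all generators $S_\alpha$ and $A_\alpha$ such that the address $\alpha$ contains at least one $0$.
   Context: Addresses are finite sequences over $\{0,1\}$, $\varepsilon$ empty, concatenation by juxtaposition; incomparable means neither is a prefix of the other. $G_{\mathtt{ALD}}$ is the group generated by $S_\alpha,A_\alpha$ ($\alpha\in\{0,1\}^*$) subject to the relations, with $X,Y\in\{S,A\}$ and arbitrary addresses $\alpha,\beta,\delta$ ($\delta$ possibly empty): $X_\alpha Y_\beta=Y_\beta X_\alpha$ for $\alpha,\beta$ incomparable; $X_{\alpha0\delta}S_\alpha=S_\alpha X_{\alpha00\delta}X_{\alpha10\delta}$; $X_{\alpha10\delta}S_\alpha=S_\alpha X_{\alpha01\delta}$; $X_{\alpha11\delta}S_\alpha=S_\alpha X_{\alpha11\delta}$; $X_{\alpha0\delta}A_\alpha=A_\alpha X_{\alpha00\delta}$; $X_{\alpha10\delta}A_\alpha=A_\alpha X_{\alpha01\delta}$; $X_{\alpha11\delta}A_\alpha=A_\alpha X_{\alpha1\delta}$; $S_\alpha S_{\alpha1}S_\alpha=S_{\alpha1}S_\alpha S_{\alpha1}S_{\alpha0}$; $S_\alpha S_{\alpha1}A_\alpha=A_{\alpha1}S_\alpha S_{\alpha0}$; $A_\alpha S_\alpha=S_{\alpha1}S_\alpha A_{\alpha1}A_{\alpha0}$. $\mathrm{sh}_0$ is the endomorphism with $S_\alpha\mapsto S_{0\alpha}$, $A_\alpha\mapsto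 A_{0\alpha}$. *)

theory Defs
  imports "HOL-Algebra.Coset"
begin

datatype bit = B0 | B1
type_synonym addr = "bit list"

datatype gen = S addr | A addr

text \<open>Words in the free group: letters (g, True) = g, (g, False) = g^-1.\<close>
type_synonym word = "(gen \<times> bool) list"

definition pw :: "gen list \<Rightarrow> word" where
  "pw gs = map (\<lambda>g. (g, True)) gs"

definition incomparable :: "addr \<Rightarrow> addr \<Rightarrow> bool" where
  "incomparable a b \<longleftrightarrow> \<not> (\<exists>c. b = a @ c) \<and> \<not> (\<exists>c. a = b @ c)"

inductive ald_rel :: "gen list \<Rightarrow> gen list \<Rightarrow> bool" where
  comm: "\<lbrakk>X \<in> {S, A}; Y \<in> {S, A}; incomparable a b\<rbrakk> \<Longrightarrow>
           ald_rel [X a, Y b] [Y b, X a]"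
| r1: "X \<in> {S, A} \<Longrightarrow> ald_rel [X (a @ [B0] @ d), S a] [S a, X (a @ [B0,B0] @ d), X (a @ [B1,B0] @ d)]"
| r2: "X \<in> {S, A} \<Longrightarrow> ald_rel [X (a @ [B1,B0] @ d), S a] [S a, X (a @ [B0,B1] @ d)]"
| r3: "X \<in> {S, A} \<Longrightarrow> ald_rel [X (a @ [B1,B1] @ d), S a] [S a, X (a @ [B1,B1] @ d)]"
| r4: "X \<in> {S, A} \<Longrightarrow> ald_rel [X (a @ [B0] @ d), A a] [A a, X (a @ [B0,B0] @ d)]"
| r5: "X \<in> {S, A} \<Longrightarrow> ald_rel [X (a @ [B1,B0] @ d), A a] [A a, X (a @ [B0,B1] @ d)]"
| r6: "X \<in> {S, A} \<Longrightarrow> ald_rel [X (a @ [B1,B1] @ d), A a] [A a, X (a @ [B1] @ d)]"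
| r7: "ald_rel [S a, S (a @ [B1]), S a] [S (a @ [B1]), S a, S (a @ [B1]), S (a @ [B0])]"
| r8: "ald_rel [S a, S (a @ [B1]), A a] [A (a @ [B1]), S a, S (a @ [B0])]"
| r9: "ald_rel [A a, S a] [S (a @ [B1]), S a, A (a @ [B1]), A (a @ [B0])]"

inductive ald_eqv :: "word \<Rightarrow> word \<Rightarrow> bool" where
  refl: "ald_eqv w w"
| sym: "ald_eqv u v \<Longrightarrow> ald_eqv v u"
| trans: "ald_eqv u v \<Longrightarrow> ald_eqv v w \<Longrightarrow> ald_eqv u w"
| ctxt: "ald_eqv u v \<Longrightarrow> ald_eqv (x @ u @ y) (x @ v @ y)"
| cancel: "ald_eqv [(g, b), (g, \<not> b)] []"
| rel: "ald_rel l r \<Longrightarrow> ald_eqv (pw l) (pw r)"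

definition ald_class :: "word \<Rightarrow> word set" where
  "ald_class w = {v. ald_eqv w v}"

definition G_ALD :: "word set monoid" where
  "G_ALD = \<lparr> carrier = range ald_class,
             mult = (\<lambda>U V. \<Union>u\<in>U. \<Union>v\<in>V. ald_class (u @ v)),
             one = ald_class [] \<rparr>"

fun sh0_gen :: "gen \<Rightarrow> gen" where
  "sh0_gen (S a) = S (B0 # a)"
| "sh0_gen (A a) = A (B0 # a)"

definition sh0_word :: "word \<Rightarrow> word" where
  "sh0_word w = map (\<lambda>(g, b). (sh0_gen g, b)) w"

definition sh0_image :: "word set set" where
  "sh0_image = {ald_class (sh0_word w) | w. True}"

end

theory Submission
  imports Defs
begin

lemma class_eq:
  assumes e: "ald_eqv u v" shows "ald_class u = ald_class v"
proof
  show "ald_class u \<subseteq> ald_class v"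
  proof
    fix z assume "z \<in> ald_class u"
    hence "ald_eqv u z" by (simp add: ald_class_def)
    hence "ald_eqv v z" by (rule ald_eqv.trans[OF ald_eqv.sym[OF e]])
    thus "z \<in> ald_class v" by (simp add: ald_class_def)
  qed
  show "ald_class v \<subseteq> ald_class u"
  proof
    fix z assume "z \<in> ald_class v"
    hence "ald_eqv v z" by (simp add: ald_class_def)
    hence "ald_eqv u z" by (rule ald_eqv.trans[OF e])
    thus "z \<in> ald_class u" by (simp add: ald_class_def)
  qed
qed

lemma class_mult:
  "ald_class u \<otimes>\<^bsub>G_ALD\<^esub> ald_class v = ald_class (u @ v)"
proof -
  have "\<And>u' v'. ald_eqv u u' \<Longrightarrow> ald_eqv v v' \<Longrightarrow> ald_class (u' @ v') = ald_class (u @ v)"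
  proof -
    fix u' v' assume h: "ald_eqv u u'" "ald_eqv v v'"
    have "ald_eqv (u @ v) (u' @ v)" using ald_eqv.ctxt[OF h(1), of "[]" v] by simp
    moreover have "ald_eqv (u' @ v) (u' @ v')" using ald_eqv.ctxt[OF h(2), of u' "[]"] by simp
    ultimately have e: "ald_eqv (u @ v) (u' @ v')" by (rule ald_eqv.trans)
    show "ald_class (u' @ v') = ald_class (u @ v)"
      using class_eq[OF e] by simp
  qed
  note key = this
  have mem: "\<And>w z. (z \<in> ald_class w) = ald_eqv w z" by (simp add: ald_class_def)
  have "(\<Union>u'\<in>ald_class u. \<Union>v'\<in>ald_class v. ald_class (u' @ v')) = ald_class (u @ v)"
  proof (rule equalityI)
    show "(\<Union>u'\<in>ald_class u. \<Union>v'\<in>ald_class v. ald_class (u' @ v')) \<subseteq> ald_class (u @ v)"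
      using key mem by (smt (verit) UN_iff subsetI)
    have "u \<in> ald_class u" "v \<in> ald_class v" using mem ald_eqv.refl by blast+
    then show "ald_class (u @ v) \<subseteq> (\<Union>u'\<in>ald_class u. \<Union>v'\<in>ald_class v. ald_class (u' @ v'))"
      by blast
  qed
  then show ?thesis by (simp add: G_ALD_def)
qed

lemma class_carrier: "ald_class w \<in> carrier G_ALD"
  by (simp add: G_ALD_def)

lemma step:
  assumes N: "N \<lhd> G_ALD"
    and X: "X \<in> {S, A}"
    and y: "ald_class (pw [X (a @ [B0,B1] @ d)]) \<in> N"
  shows "ald_class (pw [X (a @ [B1,B0] @ d)]) \<in> N"
proof -
  interpret normal N G_ALD by (rule N)
  let ?x = "ald_class (pw [X (a @ [B1,B0] @ d)])"
  let ?y = "ald_class (pw [X (a @ [B0,B1] @ d)])"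
  let ?s = "ald_class (pw [S a])"
  have "ald_eqv (pw [X (a @ [B1,B0] @ d), S a]) (pw [S a, X (a @ [B0,B1] @ d)])"
    by (rule ald_eqv.rel, rule ald_rel.r2[OF X])
  hence "ald_class (pw [X (a @ [B1,B0] @ d), S a]) = ald_class (pw [S a, X (a @ [B0,B1] @ d)])"
    by (rule class_eq)
  hence eq: "?x \<otimes>\<^bsub>G_ALD\<^esub> ?s = ?s \<otimes>\<^bsub>G_ALD\<^esub> ?y"
    by (simp add: class_mult pw_def)
  have "?x = ?s \<otimes>\<^bsub>G_ALD\<^esub> ?y \<otimes>\<^bsub>G_ALD\<^esub> inv\<^bsub>G_ALD\<^esub> ?s"
  proof -
    have "?x = ?x \<otimes>\<^bsub>G_ALD\<^esub> ?s \<otimes>\<^bsub>G_ALD\<^esub> inv\<^bsub>G_ALD\<^esub> ?s"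
      by (simp add: m_assoc class_carrier)
    then show ?thesis using eq by simp
  qed
  also have "\<dots> \<in> N" using inv_op_closed2[OF class_carrier y] .
  finally show ?thesis .
qed

lemma main:
  assumes N: "N \<lhd> G_ALD" and sh: "sh0_image \<subseteq> N" and X: "X \<in> {S, A}"
  shows "ald_class (pw [X (replicate k B1 @ B0 # d)]) \<in> N"
  using X
proof (induction k arbitrary: d)
  case 0
  have "sh0_word (pw [X (d)]) = pw [X (B0 # d)]"
    using 0 by (auto simp: sh0_word_def pw_def)
  hence "ald_class (pw [X (B0 # d)]) \<in> sh0_image" unfolding sh0_image_def
    by (metis (mono_tags, lifting) mem_Collect_eq)
  then show ?case using sh by auto
next
  case (Suc k)
  have y: "ald_class (pw [X (replicate k B1 @ [B0,B1] @ d)]) \<in> N"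
    using Suc.IH[of "B1 # d"] Suc.prems by simp
  have r: "replicate k B1 @ [B1,B0] @ d = replicate (Suc k) B1 @ B0 # d"
    by (simp add: replicate_append_same[symmetric])
  from step[OF N Suc.prems y]
  show ?case by (simp only: r)
qed

lemma bits_B1: "B0 \<notin> set ys \<Longrightarrow> ys = replicate (length ys) B1"
proof (induction ys)
  case (Cons y ys) then show ?case by (cases y) auto
qed simp

theorem lemma4p5:
  assumes "N \<lhd> G_ALD"
    and "sh0_image \<subseteq> N"
  shows "\<forall>a. B0 \<in> set a \<longrightarrow> ald_class (pw [S a]) \<in> N \<and> ald_class (pw [A a]) \<in> N"
proof (intro allI impI)
  fix a assume "B0 \<in> set a"
  then obtain ys zs where a: "a = ys @ B0 # zs" "B0 \<notin> set ys" by (metis split_list_first)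
  then have "a = replicate (length ys) B1 @ B0 # zs" using bits_B1[OF a(2)] by simp
  then show "ald_class (pw [S a]) \<in> N \<and> ald_class (pw [A a]) \<in> N"
    using main[OF assms, of S "length ys" zs] main[OF assms, of A "length ys" zs] by simp
qed

end
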